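(* Let $(\alpha,\beta)\in\Delta_K$ and let $\varepsilon_n=\varepsilon(T^n(\alpha,\beta))$, $n\ge0$. Suppose that the sequence $\{\varepsilon_n\}_{n\ge0}$ is purely periodic with period length $l$. Then the matrix $M_{\varepsilon_0}M_{\varepsilon_1}\cdots M_{\varepsilon_{l-1}}$ is primitive, i.e. some positive power of it has all entries strictly positive.
   Context: Let $K\subset\mathbb{R}$ be a real cubic number field, $N=N_{K/\mathbb{Q}}$ its norm. Fix $r=p/q$ with $p,q$ positive coprime integers and $3\nmid p$. Let $\Delta_K=\{(\alpha,\beta)\in K^2:\ 1,\alpha,\beta \text{ linearly independent over }\mathbb{Q},\ \alpha,\beta>0,\ \alpha+\beta<1\}$ and $Ind=\{(i,j): i,j\in\{0,1,2\},\ i\neq j\}$. Let $\Delta=\{(x,y)\in\mathbb{R}^2: x,y\ge 0,\ x+y\le 1\}$ and $\triangle(1,2)=\{(x,y)\in\Delta: x\ge y\}$, $\triangle(2,1)=\{x\le y\}$, $\triangle(0,1)=\{2x+y-1\le 0\}$, $\triangle(1,0)=\{2x+y-1\ge 0\}$, $\triangle(0,2)=\{x+2y-1\le0\}$, $\triangle(2,0)=\{x+2y-1\ge 0\}$ (all subsets of $\Delta$). Maps $T_{(i,j)}:\triangle(i,j)\to\Delta$: $T_{(1,2)}(x,y)=(\frac{x-y}{1-y},\frac{y}{1-y})$, $T_{(2,1)}(x,y)=(\frac{x}{1-x},\frac{y-x}{1-x})$, $T_{(0,1)}(x,y)=(\frac{x}{1-x},\frac{y}{1-x})$, $T_{(1,0)}(x,y)=(\frac{2x+y-1}{x+y},\frac{y}{x+y})$,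 $T_{(0,2)}(x,y)=(\frac{x}{1-y},\frac{y}{1-y})$, $T_{(2,0)}(x,y)=(\frac{x}{x+y},\frac{x+2y-1}{x+y})$. For $(\alpha,\beta)\in\Delta_K$ put $\gamma=1-\alpha-\beta$ and $v_{\{1,2\}}=\frac{\alpha^r\beta^r}{|N(\alpha)N(\beta)|}$, $v_{\{0,1\}}=\frac{\alpha^r\gamma^r}{|N(\alpha)N(\gamma)|}$, $v_{\{0,2\}}=\frac{\beta^r\gamma^r}{|N(\beta)N(\gamma)|}$; the maximum is attained at a unique pair $\{i_0,j_0\}$. $\varepsilon(\alpha,\beta)$ is the ordered pair $(i,j)\in Ind$ with $\{i,j\}=\{i_0,j_0\}$ and $(\alpha,\beta)\in\triangle(i,j)$, and $T(\alpha,\beta)=T_{\varepsilon(\alpha,\beta)}(\alpha,\beta)$ (a map $\Delta_K\to\Delta_K$). For $(i,j)\in Ind$, $M_{(i,j)}=(m_{k\ell})_{0\le k,\ell\le2}$ with $m_{k\ell}=1$ if $k=\ell$ or $(k,\ell)=(i,j)$, and $0$ otherwise. *)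

theory Defs
  imports "HOL-Analysis.Analysis"
begin

definition subfield_real :: "real set \<Rightarrow> bool" where
  "subfield_real K \<longleftrightarrow> 0 \<in> K \<and> 1 \<in> K \<and>
     (\<forall>x\<in>K. \<forall>y\<in>K. x + y \<in> K \<and> x * y \<in> K) \<and>
     (\<forall>x\<in>K. - x \<in> K \<and> inverse x \<in> K)"

definition rat_lin_indep :: "(nat \<Rightarrow> real) \<Rightarrow> nat \<Rightarrow> bool" where
  "rat_lin_indep b n \<longleftrightarrow>
     (\<forall>c :: nat \<Rightarrow> rat. (\<Sum>i<n. of_rat (c i) * b i) = 0 \<longrightarrow> (\<forall>i<n. c i = 0))"

definition rat_span :: "(nat \<Rightarrow> real) \<Rightarrow> nat \<Rightarrow> real set" where
  "rat_span b n = {x. \<exists>c :: nat \<Rightarrow> rat. x = (\<Sum>i<n. of_rat (c i) * b i)}"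

definition real_cubic_field :: "real set \<Rightarrow> bool" where
  "real_cubic_field K \<longleftrightarrow> subfield_real K \<and>
     (\<exists>b. (\<forall>i<3. b i \<in> K) \<and> rat_lin_indep b 3 \<and> K = rat_span b 3)"

definition embeddings :: "real set \<Rightarrow> (real \<Rightarrow> complex) set" where
  "embeddings K = {\<sigma>. \<sigma> 1 = 1 \<and>
     (\<forall>x\<in>K. \<forall>y\<in>K. \<sigma> (x + y) = \<sigma> x + \<sigma> y \<and> \<sigma> (x * y) = \<sigma> x * \<sigma> y) \<and>
     (\<forall>x. x \<notin> K \<longrightarrow> \<sigma> x = 0)}"

definition field_norm :: "real set \<Rightarrow> real \<Rightarrow> complex" where
  "field_norm K x = (\<Prod>\<sigma>\<in>embeddings K. \<sigma> x)"

definition Delta_K :: "real set \<Rightarrow> (real \<times> real) set" where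
  "Delta_K K = {(a, b). a \<in> K \<and> b \<in> K \<and> rat_lin_indep (\<lambda>i. [1, a, b] ! i) 3 \<and>
                 a > 0 \<and> b > 0 \<and> a + b < 1}"

definition T_ind :: "nat \<times> nat \<Rightarrow> real \<times> real \<Rightarrow> real \<times> real" where
  "T_ind e z = (case z of (x, y) \<Rightarrow>
     if e = (1,2) then ((x - y) / (1 - y), y / (1 - y))
     else if e = (2,1) then (x / (1 - x), (y - x) / (1 - x))
     else if e = (0,1) then (x / (1 - x), y / (1 - x))
     else if e = (1,0) then ((2*x + y - 1) / (x + y), y / (x + y))
     else if e = (0,2) then (x / (1 - y), y / (1 - y))
     else (x / (x + y), (x + 2*y - 1) / (x + y)))"

text \<open>The index map epsilon; r = p/q. The maximum of the v's is unique on Delta_K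
  (claimed in the paper), so the tie-breaking order below is immaterial there.\<close>
definition eps :: "real set \<Rightarrow> nat \<Rightarrow> nat \<Rightarrow> real \<times> real \<Rightarrow> nat \<times> nat" where
  "eps K p q z = (case z of (x, y) \<Rightarrow>
     let r = real p / real q; g = 1 - x - y;
         N = (\<lambda>t. cmod (field_norm K t));
         v12 = x powr r * y powr r / (N x * N y);
         v01 = x powr r * g powr r / (N x * N g);
         v02 = y powr r * g powr r / (N y * N g)
     in if v01 \<le> v12 \<and> v02 \<le> v12 then (if y \<le> x then (1,2) else (2,1))
        else if v02 \<le> v01 then (if 2*x + y - 1 \<le> 0 then (0,1) else (1,0))
        else (if x + 2*y - 1 \<le> 0 then (0,2) else (2,0)))"

definition Tmap :: "real set \<Rightarrow> nat \<Rightarrow> nat \<Rightarrow> real \<times> real \<Rightarrow> real \<times> real" where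
  "Tmap K p q z = T_ind (eps K p q z) z"

type_synonym mat3 = "nat \<Rightarrow> nat \<Rightarrow> nat"

definition M_ind :: "nat \<times> nat \<Rightarrow> mat3" where
  "M_ind e k l = (if k = l \<or> (k, l) = e then 1 else 0)"

definition mat_mult3 :: "mat3 \<Rightarrow> mat3 \<Rightarrow> mat3" where
  "mat_mult3 A B i j = (\<Sum>k<3. A i k * B k j)"

definition mat_id3 :: mat3 where
  "mat_id3 i j = (if i = j then 1 else 0)"

definition mat_prod_list3 :: "mat3 list \<Rightarrow> mat3" where
  "mat_prod_list3 As = foldr mat_mult3 As mat_id3"

definition mat_pow3 :: "mat3 \<Rightarrow> nat \<Rightarrow> mat3" where
  "mat_pow3 A k = mat_prod_list3 (replicate k A)"

definition primitive3 :: "mat3 \<Rightarrow> bool" where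
  "primitive3 A \<longleftrightarrow> (\<exists>k>0. \<forall>i<3. \<forall>j<3. mat_pow3 A k i j > 0)"

end

theory Submission
  imports Defs
begin


interpretation Q: vector_space "\<lambda>(c::rat) (x::real). of_rat c * x"
  by standard (auto simp: algebra_simps of_rat_add of_rat_mult)

definition indep3 :: "real \<Rightarrow> real \<Rightarrow> real \<Rightarrow> bool" where
  "indep3 x y z \<longleftrightarrow> (\<forall>a b c. of_rat a * x + of_rat b * y + of_rat c * z = 0 \<longrightarrow> a = 0 \<and> b = 0 \<and> c = 0)"

definition indep4 :: "real \<Rightarrow> real \<Rightarrow> real \<Rightarrow> real \<Rightarrow> bool" where
  "indep4 x y z w \<longleftrightarrow> (\<forall>a b c d. of_rat a * x + of_rat b * y + of_rat c * z + of_rat d * w = 0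
      \<longrightarrow> a = 0 \<and> b = 0 \<and> c = 0 \<and> d = 0)"

lemma indep3_set:
  assumes "indep3 x y z"
  shows "Q.independent {x,y,z} \<and> card {x,y,z} = 3"
proof -
  have d: "x \<noteq> y" "x \<noteq> z" "y \<noteq> z"
    using assms unfolding indep3_def
    by (metis of_rat_1 of_rat_neg_one add.commute add_0 mult_1 mult_minus_left mult_zero_left
        neg_eq_iff_add_eq_0 of_rat_0 one_neq_zero)+
  have "\<not> Q.dependent {x,y,z}"
  proof
    assume "Q.dependent {x,y,z}"
    then obtain u where u: "\<exists>v\<in>{x,y,z}. u v \<noteq> 0" "(\<Sum>v\<in>{x,y,z}. of_rat (u v) * v) = 0"
      using Q.dependent_finite[of "{x,y,z}"] by auto
    have "of_rat (u x) * x + of_rat (u y) * y + of_rat (u z) * z = 0"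
      using u(2) d by (simp add: add.assoc)
    then show False using assms u(1) unfolding indep3_def by blast
  qed
  then show ?thesis using d by auto
qed

lemma indep4_set:
  assumes "indep4 x y z w"
  shows "Q.independent {x,y,z,w} \<and> card {x,y,z,w} = 4"
proof -
  have d: "x \<noteq> y" "x \<noteq> z" "y \<noteq> z" "x \<noteq> w" "y \<noteq> w" "z \<noteq> w"
  proof -
    have k: "\<And>a b. a \<noteq> b" if "a = b" "of_rat 1 * a + of_rat (-1) * b = 0 \<Longrightarrow> False" for a b :: real
      using that by simp
    show "x \<noteq> y" using assms unfolding indep4_def
      by (metis add_0 mult_zero_left of_rat_0 of_rat_1 of_rat_neg_one mult_1 mult_minus_left
          add.right_inverse one_neq_zero)
    show "x \<noteq> z" using assms unfolding indep4_def
      by (metis (no_types) add_0 add.right_neutral mult_zero_left of_rat_0 of_rat_1 of_rat_neg_one mult_1 mult_minus_left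
          add.right_inverse one_neq_zero)
    show "y \<noteq> z" using assms unfolding indep4_def
      by (metis (no_types) add_0 add.right_neutral add.left_neutral mult_zero_left of_rat_0 of_rat_1 of_rat_neg_one mult_1 mult_minus_left
          add.right_inverse one_neq_zero)
    show "x \<noteq> w" using assms unfolding indep4_def
      by (metis (no_types) add_0 add.right_neutral mult_zero_left of_rat_0 of_rat_1 of_rat_neg_one mult_1 mult_minus_left
          add.right_inverse one_neq_zero)
    show "y \<noteq> w" using assms unfolding indep4_def
      by (metis (no_types) add_0 add.right_neutral add.left_neutral mult_zero_left of_rat_0 of_rat_1 of_rat_neg_one mult_1 mult_minus_left
          add.right_inverse one_neq_zero)
    show "z \<noteq> w" using assms unfolding indep4_def
      by (metis (no_types) add_0 add.right_neutral add.left_neutral mult_zero_left of_rat_0 of_rat_1 of_rat_neg_one mult_1 mult_minus_left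
          add.right_inverse one_neq_zero)
  qed
  have "\<not> Q.dependent {x,y,z,w}"
  proof
    assume "Q.dependent {x,y,z,w}"
    then obtain u where u: "\<exists>v\<in>{x,y,z,w}. u v \<noteq> 0" "(\<Sum>v\<in>{x,y,z,w}. of_rat (u v) * v) = 0"
      using Q.dependent_finite[of "{x,y,z,w}"] by auto
    have "of_rat (u x) * x + of_rat (u y) * y + of_rat (u z) * z + of_rat (u w) * w = 0"
      using u(2) d by (simp add: add.assoc)
    then show False using assms u(1) unfolding indep4_def by blast
  qed
  then show ?thesis using d by auto
qed

lemma aux1: fixes D E P R t :: real assumes "t*t = P*t+R"
  shows "(D + E*t) * ((D + E*P) - E*t) = D^2 + D*E*P - E^2*R"
  using assms by algebra

lemma aux2: fixes A C D E P R t :: real assumes "t*t = P*t+R"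
  shows "-(A + C*t) * ((D+E*P) - E*t) = -(A*(D+E*P) - C*E*R) - (C*D - A*E)*t"
  using assms by algebra

lemma aux3: fixes N u X Y t :: real assumes "N \<noteq> 0" "N*u = X + Y*t"
  shows "u = (X/N) + (Y/N)*t"
  using assms by (simp add: field_simps)

lemma cubic_no_quad:
  assumes K: "real_cubic_field K" and x: "x0 \<in> K" "x1 \<in> K" "x2 \<in> K" "indep3 x0 x1 x2"
    and t: "t \<in> K" "t^2 = of_rat P * t + of_rat R" "\<forall>c. t \<noteq> of_rat c"
  shows False
proof -
  obtain b where b: "\<forall>i<3. b i \<in> K" "K = rat_span b 3" and sf: "subfield_real K"
    using K unfolding real_cubic_field_def by blast
  have KS: "K \<subseteq> Q.span (b ` {..<3})"
  proof
    fix y assume "y \<in> K"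
    then obtain c where "y = (\<Sum>i<3. of_rat (c i) * b i)" using b(2) unfolding rat_span_def by auto
    moreover have "of_rat (c i) * b i \<in> Q.span (b ` {..<3})" if "i \<in> {..<3}" for i
      using that by (intro Q.span_scale Q.span_base) auto
    ultimately show "y \<in> Q.span (b ` {..<3})"
      by (auto intro!: Q.span_sum)
  qed
  have cb: "card (b ` {..<3}) \<le> 3" using card_image_le[of "{..<(3::nat)}" b] by simp
  have "\<exists>u\<in>{x0,x1,x2}. u \<notin> Q.span {1,t}"
  proof (rule ccontr)
    assume "\<not> ?thesis"
    then have "{x0,x1,x2} \<subseteq> Q.span {1,t}" by auto
    from Q.independent_span_bound[OF _ _ this] indep3_set[OF x(4)]
    have "card {x0,x1,x2} \<le> card {1,t}" by auto
    moreover have "card {1,t} \<le> 2" by (simp add: card_insert_le_m1)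
    ultimately show False using indep3_set[OF x(4)] by simp
  qed
  then obtain u where u: "u \<in> K" "u \<notin> Q.span {1,t}" using x by auto
  have one: "1 \<in> K" and mulK: "\<And>y z. y \<in> K \<Longrightarrow> z \<in> K \<Longrightarrow> y * z \<in> K"
    using sf unfolding subfield_real_def by auto
  have i4: "indep4 1 t u (t*u)"
    unfolding indep4_def
  proof (intro allI impI)
    fix a c d e :: rat
    assume h: "of_rat a * 1 + of_rat c * t + of_rat d * u + of_rat e * (t * u) = 0"
    define s where "s = of_rat d + of_rat e * t"
    show "a = 0 \<and> c = 0 \<and> d = 0 \<and> e = 0"
    proof (cases "s = 0")
      case True
      have e0: "e = 0"
      proof (rule ccontr)
        assume "e \<noteq> 0"
        then have "t = of_rat (- d / e)" using True unfolding s_def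
          by (simp add: of_rat_divide of_rat_minus field_simps)
        then show False using t(3) by blast
      qed
      then have d0: "d = 0" using True unfolding s_def by simp
      have c0: "c = 0"
      proof (rule ccontr)
        assume "c \<noteq> 0"
        have "of_rat a + of_rat c * t = 0" using h True unfolding s_def
          by (simp add: e0 d0)
        then have "t = of_rat (- a / c)" using \<open>c \<noteq> 0\<close>
          by (simp add: of_rat_divide of_rat_minus field_simps)
        then show False using t(3) by blast
      qed
      then have "a = 0" using h by (simp add: e0 d0)
      then show ?thesis using c0 d0 e0 by simp
    next
      case False
      define nu where "nu = d^2 + d * e * P - e^2 * R"
      define sb where "sb = of_rat (d + e * P) - of_rat e * t"
      have tt: "t*t = of_rat P * t + of_rat R" using t(2) by (simp add: power2_eq_square)
      have ssb: "s * sb = of_rat nu"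
        unfolding s_def sb_def nu_def using aux1[OF tt, of "of_rat d" "of_rat e"]
        by (simp add: of_rat_add of_rat_mult of_rat_diff of_rat_power)
      have nu0: "nu \<noteq> 0"
      proof
        assume "nu = 0"
        then have "sb = 0" using ssb False by simp
        show False
        proof (cases "e = 0")
          case True
          then show False using \<open>sb = 0\<close> False unfolding sb_def s_def by simp
        next
          case e: False
          then have "t = of_rat ((d + e * P) / e)" using \<open>sb = 0\<close> unfolding sb_def
            by (simp add: of_rat_divide field_simps)
          then show False using t(3) by blast
        qed
      qed
      have su: "s * u = - (of_rat a + of_rat c * t)" using h unfolding s_def by (simp add: algebra_simps)
      have "of_rat nu * u = sb * (s * u)" using ssb by (simp add: algebra_simps)
      also have "\<dots> = - (of_rat a + of_rat c * t) * (of_rat (d + e * P) - of_rat e * t)"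
        using su unfolding sb_def by (simp only: mult.commute)
      also have "\<dots> = - (of_rat a * of_rat (d + e*P) - of_rat c * of_rat e * of_rat R)
          - (of_rat c * of_rat d - of_rat a * of_rat e) * t"
        using aux2[OF tt, of "of_rat a" "of_rat c" "of_rat d" "of_rat e"]
        by (simp add: of_rat_add of_rat_mult)
      finally have "u = (- (of_rat a * of_rat (d + e*P) - of_rat c * of_rat e * of_rat R)) / of_rat nu
          + ((- (of_rat c * of_rat d - of_rat a * of_rat e)) / of_rat nu) * t"
        using nu0 by (intro aux3) (auto simp: algebra_simps)
      then have "u = of_rat ((- (a * (d + e*P) - c * e * R)) / nu) * 1
                   + of_rat ((- (c * d - a * e)) / nu) * t"
        by (simp add: of_rat_divide of_rat_add of_rat_mult of_rat_diff of_rat_minus)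
      moreover have "\<dots> \<in> Q.span {1,t}"
        by (intro Q.span_add Q.span_scale Q.span_base) auto
      ultimately show ?thesis using u(2) by simp
    qed
  qed
  have "{1,t,u,t*u} \<subseteq> Q.span (b ` {..<3})" using KS one t(1) u(1) mulK by auto
  from Q.independent_span_bound[OF _ _ this] indep4_set[OF i4]
  have "card {1,t,u,t*u} \<le> card (b ` {..<3})" by auto
  then show False using indep4_set[OF i4] cb by simp
qed



definition six :: "(nat \<times> nat) set" where
  "six = {(1,2),(2,1),(0,1),(1,0),(0,2),(2,0)}"

lemma eps_prop:
  fixes x y :: real and K :: "real set" and p q :: nat
  defines "e \<equiv> eps K p q (x,y)"
  shows "e \<in> six \<and> (e = (1,2) \<longrightarrow> y \<le> x) \<and> (e = (2,1) \<longrightarrow> \<not> y \<le> x)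
     \<and> (e = (0,1) \<longrightarrow> 2*x + y - 1 \<le> 0) \<and> (e = (1,0) \<longrightarrow> \<not> 2*x + y - 1 \<le> 0)
     \<and> (e = (0,2) \<longrightarrow> x + 2*y - 1 \<le> 0) \<and> (e = (2,0) \<longrightarrow> \<not> x + 2*y - 1 \<le> 0)"
  unfolding e_def eps_def Let_def six_def by (auto split: if_splits)

definition upd :: "(nat \<Rightarrow> real) \<Rightarrow> nat \<times> nat \<Rightarrow> nat \<Rightarrow> real" where
  "upd v e = v(fst e := v (fst e) - v (snd e))"

primrec wseq :: "(nat \<Rightarrow> nat \<times> nat) \<Rightarrow> (nat \<Rightarrow> real) \<Rightarrow> nat \<Rightarrow> nat \<Rightarrow> real" where
  "wseq e w0 0 = w0"
| "wseq e w0 (Suc n) = upd (wseq e w0 n) (e n)"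

lemma indep3_nz: "indep3 x y z \<Longrightarrow> x \<noteq> 0 \<and> y \<noteq> 0 \<and> z \<noteq> 0"
  unfolding indep3_def
  by (metis add.right_neutral add_0 mult_1 mult_zero_left mult_zero_right of_rat_0 of_rat_1 one_neq_zero)

lemma indep3_sub:
  assumes ind: "indep3 x y z"
  shows "indep3 (x - y) y z" "indep3 (x - z) y z" "indep3 x (y - x) z"
        "indep3 x (y - z) z" "indep3 x y (z - x)" "indep3 x y (z - y)"
proof -
  show "indep3 (x - y) y z" unfolding indep3_def
  proof (intro allI impI)
    fix a b c assume "of_rat a * (x - y) + of_rat b * y + of_rat c * z = 0"
    then have "of_rat a * x + of_rat (b - a) * y + of_rat c * z = 0" by (simp add: of_rat_diff algebra_simps)
    then show "a = 0 \<and> b = 0 \<and> c = 0" using ind unfolding indep3_def by fastforce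
  qed
  show "indep3 (x - z) y z" unfolding indep3_def
  proof (intro allI impI)
    fix a b c assume "of_rat a * (x - z) + of_rat b * y + of_rat c * z = 0"
    then have "of_rat a * x + of_rat b * y + of_rat (c - a) * z = 0" by (simp add: of_rat_diff algebra_simps)
    then show "a = 0 \<and> b = 0 \<and> c = 0" using ind unfolding indep3_def by fastforce
  qed
  show "indep3 x (y - x) z" unfolding indep3_def
  proof (intro allI impI)
    fix a b c assume "of_rat a * x + of_rat b * (y - x) + of_rat c * z = 0"
    then have "of_rat (a - b) * x + of_rat b * y + of_rat c * z = 0" by (simp add: of_rat_diff algebra_simps)
    then show "a = 0 \<and> b = 0 \<and> c = 0" using ind unfolding indep3_def by fastforce
  qed
  show "indep3 x (y - z) z" unfolding indep3_def
  proof (intro allI impI)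
    fix a b c assume "of_rat a * x + of_rat b * (y - z) + of_rat c * z = 0"
    then have "of_rat a * x + of_rat b * y + of_rat (c - b) * z = 0" by (simp add: of_rat_diff algebra_simps)
    then show "a = 0 \<and> b = 0 \<and> c = 0" using ind unfolding indep3_def by fastforce
  qed
  show "indep3 x y (z - x)" unfolding indep3_def
  proof (intro allI impI)
    fix a b c assume "of_rat a * x + of_rat b * y + of_rat c * (z - x) = 0"
    then have "of_rat (a - c) * x + of_rat b * y + of_rat c * z = 0" by (simp add: of_rat_diff algebra_simps)
    then show "a = 0 \<and> b = 0 \<and> c = 0" using ind unfolding indep3_def by fastforce
  qed
  show "indep3 x y (z - y)" unfolding indep3_def
  proof (intro allI impI)
    fix a b c assume "of_rat a * x + of_rat b * y + of_rat c * (z - y) = 0"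
    then have "of_rat a * x + of_rat (b - c) * y + of_rat c * z = 0" by (simp add: of_rat_diff algebra_simps)
    then show "a = 0 \<and> b = 0 \<and> c = 0" using ind unfolding indep3_def by fastforce
  qed
qed

lemma Tcalc:
  fixes a b c :: real
  assumes h: "a>0" "b>0" "c>0"
  defines "S \<equiv> a + b + c"
  shows "T_ind (1,2) (b/S, c/S) = ((b-c)/(a+(b-c)+c), c/(a+(b-c)+c))"
    "T_ind (2,1) (b/S, c/S) = (b/(a+b+(c-b)), (c-b)/(a+b+(c-b)))"
    "T_ind (0,1) (b/S, c/S) = (b/((a-b)+b+c), c/((a-b)+b+c))"
    "T_ind (1,0) (b/S, c/S) = ((b-a)/(a+(b-a)+c), c/(a+(b-a)+c))"
    "T_ind (0,2) (b/S, c/S) = (b/((a-c)+b+c), c/((a-c)+b+c))"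
    "T_ind (2,0) (b/S, c/S) = (b/(a+b+(c-a)), (c-a)/(a+b+(c-a)))"
proof -
  have S: "S > 0" "S - c > 0" "S - b > 0" "b + c > 0" using h unfolding S_def by auto
  have e: "1 - c/S = (S-c)/S" "1 - b/S = (S-b)/S" "b/S - c/S = (b-c)/S" "c/S - b/S = (c-b)/S"
    "b/S + c/S = (b+c)/S" using S by (auto simp: field_simps)
  have e2: "2*(b/S) + c/S - 1 = (b-a)/S" "b/S + 2*(c/S) - 1 = (c-a)/S"
  proof -
    have "2*(b/S) + c/S - 1 = (2*b + c - S)/S" using S by (simp add: field_simps)
    then show "2*(b/S) + c/S - 1 = (b-a)/S" unfolding S_def by simp
    have "b/S + 2*(c/S) - 1 = (b + 2*c - S)/S" using S by (simp add: field_simps)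
    then show "b/S + 2*(c/S) - 1 = (c-a)/S" unfolding S_def by simp
  qed
  have e3: "2*b/S + c/S - 1 = (b-a)/S" "b/S + 2*c/S - 1 = (c-a)/S" using e2 by simp_all
  have f: "\<And>x D. D > 0 \<Longrightarrow> (x/S)/(D/S) = x/D" using S by (auto simp: field_simps)
  have g: "a+(b-c)+c = S - c" "a+b+(c-b) = S - b" "(a-b)+b+c = S - b" "a+(b-a)+c = b + c"
     "(a-c)+b+c = S - c" "a+b+(c-a) = b + c" unfolding S_def by simp_all
  show "T_ind (1,2) (b/S, c/S) = ((b-c)/(a+(b-c)+c), c/(a+(b-c)+c))"
    unfolding g using S by (simp add: T_ind_def e e2 e3 f)
  show "T_ind (2,1) (b/S, c/S) = (b/(a+b+(c-b)), (c-b)/(a+b+(c-b)))"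
    unfolding g using S by (simp add: T_ind_def e e2 e3 f)
  show "T_ind (0,1) (b/S, c/S) = (b/((a-b)+b+c), c/((a-b)+b+c))"
    unfolding g using S by (simp add: T_ind_def e e2 e3 f)
  show "T_ind (1,0) (b/S, c/S) = ((b-a)/(a+(b-a)+c), c/(a+(b-a)+c))"
    unfolding g using S by (simp add: T_ind_def e e2 e3 f)
  show "T_ind (0,2) (b/S, c/S) = (b/((a-c)+b+c), c/((a-c)+b+c))"
    unfolding g using S by (simp add: T_ind_def e e2 e3 f)
  show "T_ind (2,0) (b/S, c/S) = (b/(a+b+(c-a)), (c-a)/(a+b+(c-a)))"
    unfolding g using S by (simp add: T_ind_def e e2 e3 f)
qed

lemma step:
  fixes v :: "nat \<Rightarrow> real" and K :: "real set" and p q :: nat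
  assumes pos: "v 0 > 0" "v 1 > 0" "v 2 > 0" and ind: "indep3 (v 0) (v 1) (v 2)"
  defines "S \<equiv> v 0 + v 1 + v 2"
  defines "e \<equiv> eps K p q (v 1 / S, v 2 / S)"
  shows "e \<in> six \<and> v (snd e) \<le> v (fst e) \<and> upd v e 0 > 0 \<and> upd v e 1 > 0 \<and> upd v e 2 > 0
    \<and> indep3 (upd v e 0) (upd v e 1) (upd v e 2)
    \<and> T_ind e (v 1 / S, v 2 / S) = (upd v e 1 / (upd v e 0 + upd v e 1 + upd v e 2),
                                     upd v e 2 / (upd v e 0 + upd v e 1 + upd v e 2))"
proof -
  have S: "S > 0" using pos unfolding S_def by simp
  have E: "e \<in> six" and c12: "e = (1,2) \<longrightarrow> v 2 / S \<le> v 1 / S"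
    and c21: "e = (2,1) \<longrightarrow> \<not> v 2 / S \<le> v 1 / S"
    and c01: "e = (0,1) \<longrightarrow> 2*(v 1/S) + v 2/S - 1 \<le> 0"
    and c10: "e = (1,0) \<longrightarrow> \<not> 2*(v 1/S) + v 2/S - 1 \<le> 0"
    and c02: "e = (0,2) \<longrightarrow> v 1/S + 2*(v 2/S) - 1 \<le> 0"
    and c20: "e = (2,0) \<longrightarrow> \<not> v 1/S + 2*(v 2/S) - 1 \<le> 0"
    using eps_prop[of K p q "v 1 / S" "v 2 / S"] unfolding e_def by auto
  have h1: "2*(v 1/S) + v 2/S - 1 = (v 1 - v 0)/S"
  proof -
    have "2*(v 1/S) + v 2/S - 1 = (2 * v 1 + v 2 - S)/S" using S by (simp add: field_simps)
    then show ?thesis unfolding S_def by simp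
  qed
  have h2: "v 1/S + 2*(v 2/S) - 1 = (v 2 - v 0)/S"
  proof -
    have "v 1/S + 2*(v 2/S) - 1 = (v 1 + 2 * v 2 - S)/S" using S by (simp add: field_simps)
    then show ?thesis unfolding S_def by simp
  qed
  have dl: "\<And>a b. a / S \<le> b / S \<longleftrightarrow> a \<le> b" using S by (simp add: divide_le_cancel)
  have dl0: "\<And>a. a / S \<le> 0 \<longleftrightarrow> a \<le> 0" using S by (simp add: divide_le_0_iff)
  have nz: "v 0 \<noteq> v 1" "v 0 \<noteq> v 2" "v 1 \<noteq> v 2"
    using ind indep3_sub[OF ind] indep3_nz by (metis diff_self)+
  from E[unfolded six_def] show ?thesis
  proof (elim insertE emptyE)
    assume ee: "e = (1,2)"
    have "v 2 \<le> v 1" using c12 ee dl by simp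
    moreover have "indep3 (v 0) (v 1 - v 2) (v 2)" using indep3_sub[OF ind] by simp
    ultimately show ?thesis using ee pos nz S indep3_nz[of "v 0" "v 1 - v 2" "v 2"]
      using Tcalc[OF pos] unfolding upd_def S_def by (auto simp: six_def)
  next
    assume ee: "e = (2,1)"
    have "v 1 \<le> v 2" using c21 ee dl by simp
    moreover have "indep3 (v 0) (v 1) (v 2 - v 1)" using indep3_sub[OF ind] by simp
    ultimately show ?thesis using ee pos nz S indep3_nz[of "v 0" "v 1" "v 2 - v 1"]
      using Tcalc[OF pos] unfolding upd_def S_def by (auto simp: six_def)
  next
    assume ee: "e = (0,1)"
    have "v 1 \<le> v 0" using mp[OF c01 ee] unfolding h1 using dl0 by (simp only:)
    moreover have "indep3 (v 0 - v 1) (v 1) (v 2)" using indep3_sub[OF ind] by simp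
    ultimately show ?thesis using ee pos nz S indep3_nz[of "v 0 - v 1" "v 1" "v 2"]
      using Tcalc[OF pos] unfolding upd_def S_def by (auto simp: six_def)
  next
    assume ee: "e = (1,0)"
    have "v 0 \<le> v 1" using mp[OF c10 ee] unfolding h1 using dl0 by (simp only:)
    moreover have "indep3 (v 0) (v 1 - v 0) (v 2)" using indep3_sub[OF ind] by simp
    ultimately show ?thesis using ee pos nz S indep3_nz[of "v 0" "v 1 - v 0" "v 2"]
      using Tcalc[OF pos] unfolding upd_def S_def by (auto simp: six_def)
  next
    assume ee: "e = (0,2)"
    have "v 2 \<le> v 0" using mp[OF c02 ee] unfolding h2 using dl0 by (simp only:)
    moreover have "indep3 (v 0 - v 2) (v 1) (v 2)" using indep3_sub[OF ind] by simp
    ultimately show ?thesis using ee pos nz S indep3_nz[of "v 0 - v 2" "v 1" "v 2"]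
      using Tcalc[OF pos] unfolding upd_def S_def by (auto simp: six_def)
  next
    assume ee: "e = (2,0)"
    have "v 0 \<le> v 2" using mp[OF c20 ee] unfolding h2 using dl0 by (simp only:)
    moreover have "indep3 (v 0) (v 1) (v 2 - v 0)" using indep3_sub[OF ind] by simp
    ultimately show ?thesis using ee pos nz S indep3_nz[of "v 0" "v 1" "v 2 - v 0"]
      using Tcalc[OF pos] unfolding upd_def S_def by (auto simp: six_def)
  qed
qed



lemma less3: "(k::nat) < 3 \<longleftrightarrow> k = 0 \<or> k = 1 \<or> k = 2" by auto

lemma indep3_ratio:
  fixes v :: "nat \<Rightarrow> real" and a b :: nat
  assumes "indep3 (v 0) (v 1) (v 2)" "a < 3" "b < 3" "a \<noteq> b"
  shows "v a \<noteq> of_rat c * v b"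
proof
  assume h: "v a = of_rat c * v b"
  have r: "\<And>x y z. indep3 x y z \<Longrightarrow> x \<noteq> of_rat c * y \<and> x \<noteq> of_rat c * z \<and> y \<noteq> of_rat c * x
     \<and> y \<noteq> of_rat c * z \<and> z \<noteq> of_rat c * x \<and> z \<noteq> of_rat c * y"
  proof -
    fix x y z assume i: "indep3 x y z"
    show "x \<noteq> of_rat c * y \<and> x \<noteq> of_rat c * z \<and> y \<noteq> of_rat c * x
     \<and> y \<noteq> of_rat c * z \<and> z \<noteq> of_rat c * x \<and> z \<noteq> of_rat c * y"
    proof (intro conjI notI)
      assume "x = of_rat c * y"
      then have "of_rat 1 * x + of_rat (-c) * y + of_rat 0 * z = 0" by (simp add: of_rat_minus)
      then show False using i[unfolded indep3_def, rule_format, of "1" "(-c)" "0"] by simp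
    next
      assume "x = of_rat c * z"
      then have "of_rat 1 * x + of_rat 0 * y + of_rat (-c) * z = 0" by (simp add: of_rat_minus)
      then show False using i[unfolded indep3_def, rule_format, of "1" "0" "(-c)"] by simp
    next
      assume "y = of_rat c * x"
      then have "of_rat (-c) * x + of_rat 1 * y + of_rat 0 * z = 0" by (simp add: of_rat_minus)
      then show False using i[unfolded indep3_def, rule_format, of "(-c)" "1" "0"] by simp
    next
      assume "y = of_rat c * z"
      then have "of_rat 0 * x + of_rat 1 * y + of_rat (-c) * z = 0" by (simp add: of_rat_minus)
      then show False using i[unfolded indep3_def, rule_format, of "0" "1" "(-c)"] by simp
    next
      assume "z = of_rat c * x"
      then have "of_rat (-c) * x + of_rat 0 * y + of_rat 1 * z = 0" by (simp add: of_rat_minus)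
      then show False using i[unfolded indep3_def, rule_format, of "(-c)" "0" "1"] by simp
    next
      assume "z = of_rat c * y"
      then have "of_rat 0 * x + of_rat (-c) * y + of_rat 1 * z = 0" by (simp add: of_rat_minus)
      then show False using i[unfolded indep3_def, rule_format, of "0" "(-c)" "1"] by simp
    qed
  qed
  from r[OF assms(1)] h assms(2-4) show False unfolding less3 by auto
qed

lemma dist_lemma:
  fixes p q r z U V U2 V2 :: real
  assumes nn: "p \<ge> 0" "q \<ge> 0" "r > 0" "z > 0" and pos: "U > 0" "V > 0" "U2 > 0" "V2 > 0"
    and det: "p * z = q * r + 1"
  shows "abs ((p*U + q*V)/(r*U + z*V) - (p*U2 + q*V2)/(r*U2 + z*V2)) \<le> 2/(r*z)"
proof -
  define X where "X = r*U + z*V"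
  define Y where "Y = r*U2 + z*V2"
  have XY: "X > 0" "Y > 0" using nn pos unfolding X_def Y_def by (simp_all add: add_pos_pos)
  have num: "(p*U + q*V)*Y - (p*U2 + q*V2)*X = U*V2 - U2*V"
  proof -
    have "(p*U + q*V)*Y - (p*U2 + q*V2)*X = (p*z - q*r) * (U*V2 - U2*V)"
      unfolding X_def Y_def by (simp add: algebra_simps)
    then show ?thesis using det by simp
  qed
  have eq: "(p*U + q*V)/X - (p*U2 + q*V2)/Y = (U*V2 - U2*V)/(X*Y)"
    using XY num by (simp add: diff_frac_eq)
  have b1: "r*U*(z*V2) \<le> X*Y"
  proof (rule mult_mono)
    show "r*U \<le> X" using nn pos unfolding X_def by simp
    show "z*V2 \<le> Y" using nn pos unfolding Y_def by simp
  qed (use XY nn pos in auto)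
  have b2: "z*V*(r*U2) \<le> X*Y"
  proof (rule mult_mono)
    show "z*V \<le> X" using nn pos unfolding X_def by simp
    show "r*U2 \<le> Y" using nn pos unfolding Y_def by simp
  qed (use XY nn pos in auto)
  have rz: "r*z > 0" using nn by simp
  have pp: "U*V2 > 0" "U2*V > 0" using pos by simp_all
  have "abs (U*V2 - U2*V) \<le> abs (U*V2) + abs (U2*V)" by (rule abs_triangle_ineq4)
  also have "\<dots> = U*V2 + U2*V" using pp by simp
  also have "\<dots> \<le> 2/(r*z) * (X*Y)"
  proof -
    have "(U*V2 + U2*V) * (r*z) = r*U*(z*V2) + z*V*(r*U2)" by (simp add: algebra_simps)
    also have "\<dots> \<le> 2 * (X*Y)" using b1 b2 by simp
    finally have "(U*V2 + U2*V) * (r*z) \<le> 2 * (X*Y)" .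
    then have "U*V2 + U2*V \<le> 2 * (X*Y) / (r*z)" using rz by (simp only: pos_le_divide_eq)
    then show ?thesis by simp
  qed
  finally have h: "abs (U*V2 - U2*V) \<le> 2/(r*z) * (X*Y)" .
  have fin: "abs (U*V2 - U2*V) / (X*Y) \<le> 2/(r*z)"
    using h XY by (simp only: pos_divide_le_eq mult_pos_pos)
  have A: "(p*U + q*V)/(r*U + z*V) - (p*U2+q*V2)/(r*U2+z*V2) = (U*V2 - U2*V)/(X*Y)"
    using eq unfolding X_def Y_def .
  have XY2: "abs (X*Y) = X*Y" using XY by simp
  have B: "abs ((U*V2 - U2*V)/(X*Y)) = abs (U*V2 - U2*V) / (X*Y)"
    unfolding abs_divide XY2 ..
  show ?thesis unfolding A B by (rule fin)
qed

lemma dyn: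
  fixes K :: "real set" and p q :: nat and \<alpha> \<beta> :: real
  defines "w0 \<equiv> (\<lambda>i::nat. if i = 0 then 1 - \<alpha> - \<beta> else if i = 1 then \<alpha> else \<beta>)"
  defines "e \<equiv> (\<lambda>n. eps K p q ((Tmap K p q ^^ n) (\<alpha>, \<beta>)))"
  assumes pos: "\<alpha> > 0" "\<beta> > 0" "\<alpha> + \<beta> < 1" and ind: "indep3 (1 - \<alpha> - \<beta>) \<alpha> \<beta>"
  shows "wseq e w0 n 0 > 0 \<and> wseq e w0 n 1 > 0 \<and> wseq e w0 n 2 > 0
     \<and> indep3 (wseq e w0 n 0) (wseq e w0 n 1) (wseq e w0 n 2)
     \<and> (Tmap K p q ^^ n) (\<alpha>, \<beta>) = (wseq e w0 n 1 / (wseq e w0 n 0 + wseq e w0 n 1 + wseq e w0 n 2),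
                                   wseq e w0 n 2 / (wseq e w0 n 0 + wseq e w0 n 1 + wseq e w0 n 2))"
proof (induction n)
  case 0
  then show ?case using pos ind unfolding w0_def by simp
next
  case (Suc n)
  define v where "v = wseq e w0 n"
  define S where "S = v 0 + v 1 + v 2"
  have IH: "v 0 > 0" "v 1 > 0" "v 2 > 0" "indep3 (v 0) (v 1) (v 2)"
     "(Tmap K p q ^^ n) (\<alpha>, \<beta>) = (v 1 / S, v 2 / S)"
    using Suc.IH unfolding v_def S_def by auto
  have en: "e n = eps K p q (v 1 / S, v 2 / S)" unfolding e_def using IH(5) by simp
  have st: "indep3 (upd v (e n) 0) (upd v (e n) 1) (upd v (e n) 2) \<and> upd v (e n) 0 > 0 \<and> upd v (e n) 1 > 0
     \<and> upd v (e n) 2 > 0 \<and> T_ind (e n) (v 1 / S, v 2 / S) = (upd v (e n) 1 / (upd v (e n) 0 + upd v (e n) 1 + upd v (e n) 2),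
                                     upd v (e n) 2 / (upd v (e n) 0 + upd v (e n) 1 + upd v (e n) 2))"
    using step[OF IH(1-4), of K p q] unfolding en S_def by auto
  have "(Tmap K p q ^^ Suc n) (\<alpha>, \<beta>) = T_ind (e n) (v 1 / S, v 2 / S)"
    using IH(5) en by (simp add: Tmap_def)
  then show ?case using st unfolding v_def by simp
qed

lemma dyn_e:
  fixes K :: "real set" and p q :: nat and \<alpha> \<beta> :: real
  defines "w0 \<equiv> (\<lambda>i::nat. if i = 0 then 1 - \<alpha> - \<beta> else if i = 1 then \<alpha> else \<beta>)"
  defines "e \<equiv> (\<lambda>n. eps K p q ((Tmap K p q ^^ n) (\<alpha>, \<beta>)))"
  assumes pos: "\<alpha> > 0" "\<beta> > 0" "\<alpha> + \<beta> < 1" and ind: "indep3 (1 - \<alpha> - \<beta>) \<alpha> \<beta>"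
  shows "e n \<in> six"
proof -
  define v where "v = wseq e w0 n"
  define S where "S = v 0 + v 1 + v 2"
  have IH: "v 0 > 0" "v 1 > 0" "v 2 > 0" "indep3 (v 0) (v 1) (v 2)"
     "(Tmap K p q ^^ n) (\<alpha>, \<beta>) = (v 1 / S, v 2 / S)"
    using dyn[OF pos ind, of K p q n] unfolding v_def S_def w0_def e_def by auto
  have en: "e n = eps K p q (v 1 / S, v 2 / S)" unfolding e_def using IH(5) by simp
  show ?thesis using step[OF IH(1-4), of K p q] unfolding en S_def by auto
qed


datatype m2 = M2 nat nat nat nat

fun mm :: "m2 \<Rightarrow> m2 \<Rightarrow> m2" where
  "mm (M2 a b c d) (M2 a' b' c' d') = M2 (a*a' + b*c') (a*b' + b*d') (c*a' + d*c') (c*b' + d*d')"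

fun g11 :: "m2 \<Rightarrow> nat" where "g11 (M2 a b c d) = a"
fun g12 :: "m2 \<Rightarrow> nat" where "g12 (M2 a b c d) = b"
fun g21 :: "m2 \<Rightarrow> nat" where "g21 (M2 a b c d) = c"
fun g22 :: "m2 \<Rightarrow> nat" where "g22 (M2 a b c d) = d"

definition sm :: "nat \<Rightarrow> nat \<Rightarrow> nat \<times> nat \<Rightarrow> m2" where
  "sm a b x = (if x = (a,b) then M2 1 1 0 1 else if x = (b,a) then M2 1 0 1 1 else M2 1 0 0 1)"

primrec Bm :: "nat \<Rightarrow> nat \<Rightarrow> (nat \<Rightarrow> nat \<times> nat) \<Rightarrow> nat \<Rightarrow> nat \<Rightarrow> m2" where
  "Bm a b e s 0 = M2 1 0 0 1"
| "Bm a b e s (Suc n) = mm (Bm a b e s n) (sm a b (e (s + n)))"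

lemma Bm_props: "g11 (Bm a b e s n) * g22 (Bm a b e s n) = g12 (Bm a b e s n) * g21 (Bm a b e s n) + 1
   \<and> g22 (Bm a b e s n) \<ge> 1 \<and> g11 (Bm a b e s n) \<ge> 1"
proof (induction n)
  case 0 then show ?case by simp
next
  case (Suc n)
  obtain x y u v where B: "Bm a b e s n = M2 x y u v" by (cases "Bm a b e s n")
  have d: "x * v = y * u + 1" "v \<ge> 1" "x \<ge> 1" using Suc.IH unfolding B by simp_all
  have "sm a b (e (s+n)) \<in> {M2 1 1 0 1, M2 1 0 1 1, M2 1 0 0 1}" unfolding sm_def by simp
  then consider "sm a b (e (s+n)) = M2 1 1 0 1" | "sm a b (e (s+n)) = M2 1 0 1 1" | "sm a b (e (s+n)) = M2 1 0 0 1"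
    by blast
  then show ?case
  proof cases
    case 1
    have BB: "Bm a b e s (Suc n) = M2 x (x+y) u (u+v)" using 1 B by simp
    have "x * (u + v) = (x + y) * u + 1" using d(1) by (simp add: add_mult_distrib add_mult_distrib2)
    then show ?thesis using d unfolding BB by simp
  next
    case 2
    have BB: "Bm a b e s (Suc n) = M2 (x+y) y (u+v) v" using 2 B by simp
    have "(x + y) * v = y * (u + v) + 1" using d(1) by (simp add: add_mult_distrib add_mult_distrib2)
    then show ?thesis using d unfolding BB by simp
  next
    case 3
    have BB: "Bm a b e s (Suc n) = M2 x y u v" using 3 B by simp
    show ?thesis using d unfolding BB by simp
  qed
qed

lemma Bm_mono21: "g21 (Bm a b e s n) \<le> g21 (Bm a b e s (Suc n))"
  and Bm_inc21: "e (s + n) = (b,a) \<Longrightarrow> a \<noteq> b \<Longrightarrow> g21 (Bm a b e s n) + 1 \<le> g21 (Bm a b e s (Suc n))"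
proof -
  obtain x y u v where B: "Bm a b e s n = M2 x y u v" by (cases "Bm a b e s n")
  have "v \<ge> 1" using Bm_props[of a b e s n] B by simp
  then show "g21 (Bm a b e s n) \<le> g21 (Bm a b e s (Suc n))"
    "e (s + n) = (b,a) \<Longrightarrow> a \<noteq> b \<Longrightarrow> g21 (Bm a b e s n) + 1 \<le> g21 (Bm a b e s (Suc n))"
    using B by (auto simp: sm_def)
qed

lemma Bm_mono21': "m \<le> n \<Longrightarrow> g21 (Bm a b e s m) \<le> g21 (Bm a b e s n)"
proof (induction n rule: dec_induct)
  case base then show ?case by simp
next
  case (step n) then show ?case using Bm_mono21[of a b e s n] by linarith
qed

context
  fixes e :: "nat \<Rightarrow> nat \<times> nat" and w0 :: "nat \<Rightarrow> real" and l :: nat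
  assumes six: "\<forall>n. e n \<in> six" and pos: "\<forall>n k. k < 3 \<longrightarrow> wseq e w0 n k > 0"
    and per: "\<forall>n. e (n + l) = e n" and l: "l > 0"
begin

lemma six_fst: "fst (e n) < 3" "snd (e n) < 3" "fst (e n) \<noteq> snd (e n)"
  using six[rule_format, of n] unfolding six_def by auto

lemma per_k: "e (n + k * l) = e n"
proof (induction k)
  case 0 then show ?case by simp
next
  case (Suc k)
  have "n + Suc k * l = (n + k * l) + l" by simp
  then show ?case using per Suc by metis
qed

lemma inE: "e n \<in> e ` {..<l}"
proof -
  have "n = n mod l + (n div l) * l" by simp
  then have "e n = e (n mod l)" using per_k[of "n mod l" "n div l"] by metis
  then show ?thesis using l by auto
qed

lemma wmono1: "wseq e w0 (Suc n) k \<le> wseq e w0 n k"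
  using pos[rule_format, of "snd (e n)" n] six_fst[of n] by (auto simp: upd_def)

lemma wmono: "m \<le> n \<Longrightarrow> wseq e w0 n k \<le> wseq e w0 m k"
proof (induction n rule: dec_induct)
  case base then show ?case by simp
next
  case (step n) then show ?case using wmono1[of n k] by linarith
qed

lemma D1:
  assumes ij: "(i,j) \<in> e ` {..<l}"
  shows "\<exists>x. (j,x) \<in> e ` {..<l}"
proof (rule ccontr)
  assume no: "\<not> (\<exists>x. (j,x) \<in> e ` {..<l})"
  have nf: "fst (e n) \<noteq> j" for n
  proof
    assume "fst (e n) = j"
    then have "(j, snd (e n)) \<in> e ` {..<l}" using inE[of n] by (metis prod.collapse)
    then show False using no by blast
  qed
  have const: "wseq e w0 n j = w0 j" for n
    by (induction n) (use nf in \<open>auto simp: upd_def\<close>)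
  obtain n0 where n0: "n0 < l" "e n0 = (i,j)" using ij by auto
  have ijl: "i < 3" "j < 3" "i \<noteq> j" using six_fst[of n0] n0 by auto
  define c where "c = w0 j"
  have c: "c > 0" using pos[rule_format, of j 0] ijl unfolding c_def by simp
  have key: "wseq e w0 (n0 + k * l) i \<le> w0 i - real k * c" for k
  proof (induction k)
    case 0
    then show ?case using wmono[of 0 n0 i] by simp
  next
    case (Suc k)
    have ek: "e (n0 + k * l) = (i,j)" using per_k[of n0 k] n0 by simp
    have "wseq e w0 (n0 + Suc k * l) i \<le> wseq e w0 (Suc (n0 + k * l)) i"
      using l by (intro wmono) simp
    also have "\<dots> = wseq e w0 (n0 + k * l) i - c"
      using ek ijl const unfolding c_def by (simp add: upd_def)
    also have "\<dots> \<le> w0 i - real (Suc k) * c" using Suc by (simp add: algebra_simps)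
    finally show ?case .
  qed
  obtain k where k: "w0 i < real k * c" using reals_Archimedean3[OF c] by blast
  have "wseq e w0 (n0 + k * l) i > 0" using pos ijl by auto
  then show False using key[of k] k by linarith
qed


lemma D3:
  assumes K: "real_cubic_field K" and w0K: "\<forall>k<3. w0 k \<in> K" and ind: "indep3 (w0 0) (w0 1) (w0 2)"
    and ab: "a < 3" "b < 3" "a \<noteq> b" "(a,b) \<in> e ` {..<l}" "(b,a) \<in> e ` {..<l}"
    and cl: "\<forall>x y. (x,y) \<in> e ` {..<l} \<longrightarrow> (x = a \<or> x = b) \<longrightarrow> (y = a \<or> y = b)"
  shows False
proof -
  have cla: "e n = (a,b)" if "fst (e n) = a" for n
  proof -
    have "(a, snd (e n)) \<in> e ` {..<l}" using inE[of n] that by (metis prod.collapse)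
    then have "snd (e n) = a \<or> snd (e n) = b" using cl by blast
    then show ?thesis using six_fst(3)[of n] that by (metis prod.collapse)
  qed
  have clb: "e n = (b,a)" if "fst (e n) = b" for n
  proof -
    have "(b, snd (e n)) \<in> e ` {..<l}" using inE[of n] that by (metis prod.collapse)
    then have "snd (e n) = a \<or> snd (e n) = b" using cl by blast
    then show ?thesis using six_fst(3)[of n] that by (metis prod.collapse)
  qed
  have inv: "wseq e w0 s a = real (g11 (Bm a b e s n)) * wseq e w0 (s+n) a + real (g12 (Bm a b e s n)) * wseq e w0 (s+n) b
     \<and> wseq e w0 s b = real (g21 (Bm a b e s n)) * wseq e w0 (s+n) a + real (g22 (Bm a b e s n)) * wseq e w0 (s+n) b"
    for s n
  proof (induction n)
    case 0 then show ?case by simp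
  next
    case (Suc n)
    obtain x y u v where B: "Bm a b e s n = M2 x y u v" by (cases "Bm a b e s n")
    define A where "A = wseq e w0 (s+n) a"
    define C where "C = wseq e w0 (s+n) b"
    define A' where "A' = wseq e w0 (s + Suc n) a"
    define C' where "C' = wseq e w0 (s + Suc n) b"
    have IH: "wseq e w0 s a = real x * A + real y * C" "wseq e w0 s b = real u * A + real v * C"
      using Suc.IH unfolding B A_def C_def by auto
    have ws: "wseq e w0 (s + Suc n) = upd (wseq e w0 (s+n)) (e (s+n))" by simp
    consider "e (s+n) = (a,b)" | "e (s+n) = (b,a)" | "fst (e (s+n)) \<noteq> a" "fst (e (s+n)) \<noteq> b"
      using cla clb by blast
    then show ?case
    proof cases
      case 1
      have BB: "Bm a b e s (Suc n) = M2 x (x+y) u (u+v)" using 1 B by (simp add: sm_def)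
      have "A = A' + C'" "C = C'" unfolding A_def C_def A'_def C'_def ws using 1 ab by (auto simp: upd_def)
      then show ?thesis unfolding BB using IH unfolding A'_def C'_def by (simp add: algebra_simps)
    next
      case 2
      have BB: "Bm a b e s (Suc n) = M2 (x+y) y (u+v) v" using 2 B ab by (simp add: sm_def)
      have "A = A'" "C = C' + A'" unfolding A_def C_def A'_def C'_def ws using 2 ab by (auto simp: upd_def)
      then show ?thesis unfolding BB using IH unfolding A'_def C'_def by (simp add: algebra_simps)
    next
      case 3
      have "e (s+n) \<noteq> (a,b)" "e (s+n) \<noteq> (b,a)" using 3 by auto
      then have BB: "Bm a b e s (Suc n) = M2 x y u v" using B by (simp add: sm_def)
      have "A = A'" "C = C'" unfolding A_def C_def A'_def C'_def ws using 3 by (auto simp: upd_def)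
      then show ?thesis unfolding BB using IH unfolding A'_def C'_def by simp
    qed
  qed
  have perB: "Bm a b e l n = Bm a b e 0 n" for n
  proof (induction n)
    case 0 then show ?case by simp
  next
    case (Suc n)
    have "e (l + n) = e (0 + n)" using per[rule_format, of n] by (simp add: add.commute)
    then show ?case using Suc by simp
  qed
  obtain n1 where n1: "n1 < l" "e n1 = (b,a)" using ab(5) by auto
  have grow: "g21 (Bm a b e 0 (k*l)) \<ge> k" for k
  proof (induction k)
    case 0 then show ?case by simp
  next
    case (Suc k)
    have e1: "e (0 + (k*l + n1)) = (b,a)" using per_k[of n1 k] n1 by (simp add: add.commute)
    have "g21 (Bm a b e 0 (k*l)) \<le> g21 (Bm a b e 0 (k*l + n1))" by (rule Bm_mono21') simp
    also have "\<dots> + 1 \<le> g21 (Bm a b e 0 (Suc (k*l + n1)))" by (rule Bm_inc21[of e 0 "k*l + n1" b a, OF e1 ab(3)])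
    also have "\<dots> \<le> g21 (Bm a b e 0 (Suc k * l))" by (rule Bm_mono21') (use n1 in simp)
    finally show ?case using Suc by linarith
  qed
  define U0 where "U0 = wseq e w0 0 a"
  define V0 where "V0 = wseq e w0 0 b"
  define U1 where "U1 = wseq e w0 l a"
  define V1 where "V1 = wseq e w0 l b"
  have posw: "wseq e w0 n a > 0" "wseq e w0 n b > 0" for n using pos ab by auto
  have dist: "abs (U0/V0 - U1/V1) \<le> 2 / (real (g21 (Bm a b e 0 n)) * real (g22 (Bm a b e 0 n)))"
    if "g21 (Bm a b e 0 n) \<ge> 1" for n
  proof -
    obtain x y u v where B: "Bm a b e 0 n = M2 x y u v" by (cases "Bm a b e 0 n")
    have i0: "U0 = real x * wseq e w0 n a + real y * wseq e w0 n b" "V0 = real u * wseq e w0 n a + real v * wseq e w0 n b"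
      using inv[of 0 n] B unfolding U0_def V0_def by auto
    have i1: "U1 = real x * wseq e w0 (l+n) a + real y * wseq e w0 (l+n) b" "V1 = real u * wseq e w0 (l+n) a + real v * wseq e w0 (l+n) b"
      using inv[of l n] B perB[of n] unfolding U1_def V1_def by auto
    have pr: "x * v = y * u + 1" "v \<ge> 1" using Bm_props[of a b e 0 n] B by simp_all
    have prr: "real x * real v = real y * real u + 1" using pr(1) by (metis of_nat_add of_nat_mult of_nat_1)
    have "u \<ge> 1" using that B by simp
    then show ?thesis unfolding i0 i1 using B
      by (simp del: of_nat_mult) (rule dist_lemma; use posw pr prr in simp)
  qed
  have eqt: "U0/V0 = U1/V1"
  proof (rule ccontr)
    assume "U0/V0 \<noteq> U1/V1"
    then have dpos: "abs (U0/V0 - U1/V1) > 0" by simp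
    obtain k :: nat where k: "2 / abs (U0/V0 - U1/V1) < real k" using reals_Archimedean2 by blast
    have k1: "k \<ge> 1" using k dpos by (cases k) (auto simp: field_simps)
    define B where "B = Bm a b e 0 (k*l)"
    have g1: "g21 B \<ge> k" "g22 B \<ge> 1" using grow[of k] Bm_props[of a b e 0 "k*l"] unfolding B_def by auto
    have "abs (U0/V0 - U1/V1) \<le> 2 / (real (g21 B) * real (g22 B))"
      using dist[of "k*l"] g1 k1 unfolding B_def by auto
    also have "\<dots> \<le> 2 / real k"
    proof -
      have "real k \<le> real (g21 B) * real (g22 B)"
        using g1 by (metis mult_le_mono of_nat_le_iff of_nat_mult mult_1_right)
      then show ?thesis using k1 by (intro divide_left_mono) auto
    qed
    also have "\<dots> < abs (U0/V0 - U1/V1)" using k dpos k1 by (simp add: field_simps)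
    finally show False by simp
  qed
  obtain x y u v where Q: "Bm a b e 0 l = M2 x y u v" by (cases "Bm a b e 0 l")
  have u1: "u \<ge> 1" using grow[of 1] Q by simp
  have q0: "U0 = real x * U1 + real y * V1" "V0 = real u * U1 + real v * V1"
    using inv[of 0 l] Q unfolding U0_def V0_def U1_def V1_def by auto
  define t where "t = U0 / V0"
  have V0p: "V0 > 0" "V1 > 0" using posw(2)[of 0] posw(2)[of l] unfolding V0_def V1_def by auto
  have U1t: "U1 = t * V1" using eqt V0p unfolding t_def by (simp add: field_simps)
  have "t * V0 = U0" using V0p unfolding t_def by simp
  then have "t * (real u * t * V1 + real v * V1) = real x * t * V1 + real y * V1"
    unfolding q0 U1t by (simp add: algebra_simps)
  then have "(t * (real u * t + real v)) * V1 = (real x * t + real y) * V1"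
    by (simp add: algebra_simps)
  then have "t * (real u * t + real v) = real x * t + real y" using V0p by simp
  then have tq: "t^2 = ((real x - real v) / real u) * t + real y / real u"
    using u1 by (simp add: field_simps power2_eq_square)
  define P :: rat where "P = (of_nat x - of_nat v) / of_nat u"
  define R :: rat where "R = of_nat y / of_nat u"
  have tq': "t^2 = of_rat P * t + of_rat R" unfolding P_def R_def tq
    by (simp add: of_rat_divide of_rat_diff)
  have sf: "subfield_real K" using K unfolding real_cubic_field_def by blast
  have tK: "t \<in> K"
  proof -
    have "w0 a \<in> K" "w0 b \<in> K" using w0K ab by auto
    then have "w0 a * inverse (w0 b) \<in> K" using sf unfolding subfield_real_def by blast
    then show ?thesis unfolding t_def U0_def V0_def by (simp add: divide_inverse)
  qed
  have tirr: "\<forall>c. t \<noteq> of_rat c"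
  proof (intro allI notI)
    fix c assume "t = of_rat c"
    then have "w0 a = of_rat c * w0 b" using V0p unfolding t_def U0_def V0_def by (simp add: field_simps)
    then show False using indep3_ratio[OF ind ab(1-3)] by blast
  qed
  have "w0 0 \<in> K" "w0 1 \<in> K" "w0 2 \<in> K" using w0K by auto
  from cubic_no_quad[OF K this ind tK tq' tirr] show False .
qed


lemma Ew: "(x,y) \<in> e ` {..<l} \<Longrightarrow> x < 3 \<and> y < 3 \<and> x \<noteq> y"
  using six_fst by (metis fst_conv imageE snd_conv)

lemma G:
  assumes D3': "\<And>a b. a < 3 \<Longrightarrow> b < 3 \<Longrightarrow> a \<noteq> b \<Longrightarrow> (a,b) \<in> e ` {..<l} \<Longrightarrow> (b,a) \<in> e ` {..<l}
     \<Longrightarrow> (\<forall>x y. (x,y) \<in> e ` {..<l} \<longrightarrow> (x = a \<or> x = b) \<longrightarrow> (y = a \<or> y = b)) \<Longrightarrow> False"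
  shows "\<forall>i<3. \<forall>j<3. i \<noteq> j \<longrightarrow> (i,j) \<in> e ` {..<l} \<or> (\<exists>m<3. (i,m) \<in> e ` {..<l} \<and> (m,j) \<in> e ` {..<l})"
proof (intro allI impI)
  fix i j :: nat assume ij: "i < 3" "j < 3" "i \<noteq> j"
  define E where "E = e ` {..<l}"
  have Ew': "\<And>x y. (x,y) \<in> E \<Longrightarrow> x < 3 \<and> y < 3 \<and> x \<noteq> y" using Ew unfolding E_def by blast
  have D1': "\<And>x y. (x,y) \<in> E \<Longrightarrow> \<exists>z. (y,z) \<in> E" using D1 unfolding E_def by blast
  show "(i,j) \<in> e ` {..<l} \<or> (\<exists>m<3. (i,m) \<in> e ` {..<l} \<and> (m,j) \<in> e ` {..<l})"
    unfolding E_def[symmetric]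
  proof (rule ccontr)
    assume nc: "\<not> ((i,j) \<in> E \<or> (\<exists>m<3. (i,m) \<in> E \<and> (m,j) \<in> E))"
    then have nij: "(i,j) \<notin> E" and np: "\<And>m. m < 3 \<Longrightarrow> (i,m) \<in> E \<Longrightarrow> (m,j) \<notin> E" by auto
    define m where "m = 3 - i - j"
    have m: "m < 3" "m \<noteq> i" "m \<noteq> j" using ij unfolding m_def less3 by auto
    have third: "\<And>x. x < 3 \<Longrightarrow> x \<noteq> i \<Longrightarrow> x \<noteq> j \<Longrightarrow> x = m" using ij unfolding m_def less3 by auto
    show False
    proof (cases "(i,m) \<in> E")
      case True
      then have nmj: "(m,j) \<notin> E" using np m by blast
      from D1'[OF True] obtain x where x: "(m,x) \<in> E" by blast
      have "x = i" using Ew'[OF x] x nmj third m by blast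
      then have mi: "(m,i) \<in> E" using x by simp
      show False
      proof (rule D3'[of i m])
        show "\<forall>x y. (x,y) \<in> e ` {..<l} \<longrightarrow> (x = i \<or> x = m) \<longrightarrow> (y = i \<or> y = m)"
        proof (intro allI impI)
          fix x y assume xy: "(x,y) \<in> e ` {..<l}" "x = i \<or> x = m"
          then have xyE: "(x,y) \<in> E" unfolding E_def by simp
          show "y = i \<or> y = m"
          proof (cases "x = i")
            case True
            then show ?thesis using Ew'[OF xyE] xyE nij third by blast
          next
            case False
            then have "x = m" using xy by simp
            then show ?thesis using Ew'[OF xyE] xyE nmj third by blast
          qed
        qed
      qed (use ij m True mi E_def in auto)
    next
      case False
      have noout: "(i,y) \<notin> E" for y
      proof
        assume iy: "(i,y) \<in> E"
        then have "y = j \<or> y = m" using Ew'[OF iy] third by blast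
        then show False using iy nij False by blast
      qed
      have noin: "(x,i) \<notin> E" for x
        using D1' noout by blast
      have e0: "e 0 \<in> E" unfolding E_def using l by simp
      obtain x y where xy: "e 0 = (x,y)" by (cases "e 0")
      have xyE: "(x,y) \<in> E" using e0 xy by simp
      have xy': "x \<noteq> i" "y \<noteq> i" using xyE noout noin by auto
      have jm: "(j,m) \<in> E \<and> (m,j) \<in> E"
      proof (cases "x = j")
        case True
        then have "y = m" using Ew'[OF xyE] xy' third by blast
        then have jmE: "(j,m) \<in> E" using xyE True by simp
        from D1'[OF jmE] obtain z where z: "(m,z) \<in> E" by blast
        have "z = j" using Ew'[OF z] z noin third by blast
        then show ?thesis using jmE z by simp
      next
        case False
        then have "x = m" using Ew'[OF xyE] xy' third by blast
        moreover have "y = j" using Ew'[OF xyE] xy' third \<open>x = m\<close> m by metis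
        ultimately have mjE: "(m,j) \<in> E" using xyE by simp
        from D1'[OF mjE] obtain z where z: "(j,z) \<in> E" by blast
        have "z = m" using Ew'[OF z] z noin third by blast
        then show ?thesis using mjE z by simp
      qed
      show False
      proof (rule D3'[of j m])
        show "\<forall>x y. (x,y) \<in> e ` {..<l} \<longrightarrow> (x = j \<or> x = m) \<longrightarrow> (y = j \<or> y = m)"
        proof (intro allI impI)
          fix x y assume xy: "(x,y) \<in> e ` {..<l}" "x = j \<or> x = m"
          then have xyE: "(x,y) \<in> E" unfolding E_def by simp
          have "y \<noteq> i" using noin xyE by blast
          then show "y = j \<or> y = m" using Ew'[OF xyE] third by blast
        qed
      qed (use ij m jm E_def in auto)
    qed
  qed
qed

end


lemma term_le: "k < 3 \<Longrightarrow> A i k * B k j \<le> mat_mult3 A B i j"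
  unfolding mat_mult3_def by (rule member_le_sum) auto

lemma prod_ge: "i < 3 \<Longrightarrow> j < 3 \<Longrightarrow> i = j \<or> (i,j) \<in> set es \<Longrightarrow> mat_prod_list3 (map M_ind es) i j \<ge> 1"
proof (induction es arbitrary: i j)
  case Nil then show ?case by (simp add: mat_prod_list3_def mat_id3_def)
next
  case (Cons x es)
  define P where "P = mat_prod_list3 (map M_ind es)"
  have eq: "mat_prod_list3 (map M_ind (x # es)) = mat_mult3 (M_ind x) P"
    unfolding P_def by (simp add: mat_prod_list3_def)
  consider "i = j" | "(i,j) = x" | "(i,j) \<in> set es" using Cons.prems by auto
  then show ?case
  proof cases
    case 1
    have "P i i \<ge> 1" using Cons.IH[of i i] Cons.prems unfolding P_def by simp
    moreover have "M_ind x i i * P i i \<le> mat_mult3 (M_ind x) P i i" using term_le Cons.prems by blast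
    ultimately show ?thesis unfolding eq using 1 by (simp add: M_ind_def)
  next
    case 2
    have "P j j \<ge> 1" using Cons.IH[of j j] Cons.prems unfolding P_def by simp
    moreover have "M_ind x i j * P j j \<le> mat_mult3 (M_ind x) P i j" using term_le Cons.prems by blast
    ultimately show ?thesis unfolding eq using 2 by (simp add: M_ind_def)
  next
    case 3
    have "P i j \<ge> 1" using Cons.IH[of i j] Cons.prems 3 unfolding P_def by simp
    moreover have "M_ind x i i * P i j \<le> mat_mult3 (M_ind x) P i j" using term_le Cons.prems by blast
    ultimately show ?thesis unfolding eq by (simp add: M_ind_def)
  qed
qed

lemma mult_id3: "j < 3 \<Longrightarrow> mat_mult3 P mat_id3 k j = P k j"
  unfolding mat_mult3_def mat_id3_def less3 by (auto simp: numeral_3_eq_3 lessThan_Suc)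

lemma prim_from_graph:
  assumes "\<forall>i<3. \<forall>j<3. i \<noteq> j \<longrightarrow> (i,j) \<in> set es \<or> (\<exists>m<3. (i,m) \<in> set es \<and> (m,j) \<in> set es)"
  shows "primitive3 (mat_prod_list3 (map M_ind es))"
  unfolding primitive3_def
proof (intro exI[of _ 2] conjI allI impI)
  fix i j :: nat assume ij: "i < 3" "j < 3"
  define P where "P = mat_prod_list3 (map M_ind es)"
  have pw: "mat_pow3 P 2 i j = mat_mult3 P (mat_mult3 P mat_id3) i j"
    unfolding mat_pow3_def mat_prod_list3_def by (simp add: numeral_2_eq_2)
  have pk: "P k m \<le> mat_pow3 P 2 i j" if "k = i" "m < 3" "P m j \<ge> 1" for k m
  proof -
    have "P i m * mat_mult3 P mat_id3 m j \<le> mat_mult3 P (mat_mult3 P mat_id3) i j"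
      using term_le that by blast
    then show ?thesis using that mult_id3[OF ij(2)] unfolding pw
      by (metis le_trans mult_le_mono2 nat_mult_1_right)
  qed
  have "\<exists>m<3. P i m \<ge> 1 \<and> P m j \<ge> 1"
  proof (cases "i = j")
    case True then show ?thesis using ij prod_ge unfolding P_def by blast
  next
    case False
    then consider "(i,j) \<in> set es" | m where "m<3" "(i,m) \<in> set es" "(m,j) \<in> set es" using assms ij by blast
    then show ?thesis
    proof cases
      case 1 then show ?thesis using ij prod_ge unfolding P_def by blast
    next
      case 2 then show ?thesis using ij prod_ge unfolding P_def by blast
    qed
  qed
  then obtain m where "m < 3" "P i m \<ge> 1" "P m j \<ge> 1" by blast
  then show "0 < mat_pow3 (mat_prod_list3 (map M_ind es)) 2 i j"
    using pk[of i m] unfolding P_def by fastforce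
qed simp


lemma indep3_of_Delta:
  assumes "rat_lin_indep (\<lambda>i. [1, a, b] ! i) 3"
  shows "indep3 (1 - a - b) a b"
  unfolding indep3_def
proof (intro allI impI)
  fix x y z :: rat
  assume h: "of_rat x * (1 - a - b) + of_rat y * a + of_rat z * b = 0"
  define c where "c = (\<lambda>i::nat. [x, y - x, z - x] ! i)"
  have "(\<Sum>i<3. of_rat (c i) * [1, a, b] ! i) = of_rat x * (1 - a - b) + of_rat y * a + of_rat z * b"
    unfolding c_def by (simp add: numeral_3_eq_3 lessThan_Suc of_rat_diff algebra_simps)
  then have "\<forall>i<3. c i = 0" using assms h unfolding rat_lin_indep_def by simp
  then have "c 0 = 0" "c 1 = 0" "c 2 = 0" by auto
  then show "x = 0 \<and> y = 0 \<and> z = 0" unfolding c_def by simp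
qed

theorem theorem3p7:
  fixes K :: "real set" and p q l :: nat and \<alpha> \<beta> :: real
  assumes "real_cubic_field K"
    and "p > 0" and "q > 0" and "coprime p q" and "\<not> 3 dvd p"
    and "(\<alpha>, \<beta>) \<in> Delta_K K"
    and "l > 0"
    and "\<forall>n. eps K p q ((Tmap K p q ^^ (n + l)) (\<alpha>, \<beta>)) = eps K p q ((Tmap K p q ^^ n) (\<alpha>, \<beta>))"
    and "\<forall>l'. 0 < l' \<and> l' < l \<longrightarrow>
           (\<exists>n. eps K p q ((Tmap K p q ^^ (n + l')) (\<alpha>, \<beta>)) \<noteq> eps K p q ((Tmap K p q ^^ n) (\<alpha>, \<beta>)))"
  shows "primitive3 (mat_prod_list3 (map (\<lambda>n. M_ind (eps K p q ((Tmap K p q ^^ n) (\<alpha>, \<beta>)))) [0..<l]))"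
proof -
  note K = assms(1) and D = assms(6) and l = assms(7) and per0 = assms(8)
  have aK: "\<alpha> \<in> K" "\<beta> \<in> K" and ri: "rat_lin_indep (\<lambda>i. [1, \<alpha>, \<beta>] ! i) 3"
    and pos: "\<alpha> > 0" "\<beta> > 0" "\<alpha> + \<beta> < 1"
    using D unfolding Delta_K_def by auto
  have ind: "indep3 (1 - \<alpha> - \<beta>) \<alpha> \<beta>" by (rule indep3_of_Delta[OF ri])
  define w0 where "w0 = (\<lambda>i::nat. if i = 0 then 1 - \<alpha> - \<beta> else if i = 1 then \<alpha> else \<beta>)"
  define e where "e = (\<lambda>n. eps K p q ((Tmap K p q ^^ n) (\<alpha>, \<beta>)))"
  have sixe: "\<forall>n. e n \<in> six" using dyn_e[OF pos ind] unfolding e_def by blast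
  have posw: "\<forall>n k. k < 3 \<longrightarrow> wseq e w0 n k > 0"
    using dyn[OF pos ind, of K p q] unfolding e_def w0_def less3 by blast
  have per: "\<forall>n. e (n + l) = e n" using per0 unfolding e_def by blast
  have sf: "subfield_real K" using K unfolding real_cubic_field_def by blast
  have gK: "1 - \<alpha> - \<beta> \<in> K"
  proof -
    have "1 \<in> K" "- \<alpha> \<in> K" "- \<beta> \<in> K" using sf aK unfolding subfield_real_def by auto
    then have "1 + - \<alpha> + - \<beta> \<in> K" using sf unfolding subfield_real_def by blast
    then show ?thesis by simp
  qed
  have w0K: "\<forall>k<3. w0 k \<in> K" using gK aK unfolding w0_def less3 by auto
  have ind0: "indep3 (w0 0) (w0 1) (w0 2)" using ind unfolding w0_def by simp
  have Gr: "\<forall>i<3. \<forall>j<3. i \<noteq> j \<longrightarrow> (i,j) \<in> e ` {..<l} \<or> (\<exists>m<3. (i,m) \<in> e ` {..<l} \<and> (m,j) \<in> e ` {..<l})"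
    by (rule G[OF sixe posw per l]) (rule D3[OF sixe posw per l K w0K ind0]; assumption)
  have st: "set (map e [0..<l]) = e ` {..<l}" by auto
  have mp: "map (\<lambda>n. M_ind (eps K p q ((Tmap K p q ^^ n) (\<alpha>, \<beta>)))) [0..<l] = map M_ind (map e [0..<l])"
    unfolding e_def by simp
  show ?thesis unfolding mp by (rule prim_from_graph) (unfold st, rule Gr)
qed


end
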